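(* Let $\Theta$ be the set of $p\times p$ positive-definite matrices and assume $\mu_1\ne\mu_2$. For every constant $c>0$, the matrix $A=c(\Sigma_1/n_1+\Sigma_2/n_2)^{-1}$ maximizes $\Delta(A)/\{K_2(A)\}^{1/2}$ over $A\in\Theta$, i.e. $\Delta(A)/\{K_2(A)\}^{1/2}\le \Delta(c(\Sigma_1/n_1+\Sigma_2/n_2)^{-1})/\{K_2(c(\Sigma_1/n_1+\Sigma_2/n_2)^{-1})\}^{1/2}$ for all $A\in\Theta$.
   Context: Two populations on $\mathbb{R}^p$ have mean vectors $\mu_1,\mu_2$ and positive-definite covariance matrices $\Sigma_1,\Sigma_2$; $n_1,n_2$ are positive integers (sample sizes). For positive-definite $A$: $\mu_A=A^{1/2}(\mu_1-\mu_2)$, $\Sigma_{i,A}=A^{1/2}\Sigma_iA^{1/2}$, $\Delta(A)=\|\mu_A\|^2$, $K_2(A)=4\sum_{i=1}^2\mu_A^T\Sigma_{i,A}\mu_A/n_i$. *)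

theory Defs
  imports "HOL-Analysis.Analysis"
begin

definition pos_def_mat :: "real^'n^'n \<Rightarrow> bool" where
  "pos_def_mat A \<longleftrightarrow> transpose A = A \<and> (\<forall>x. x \<noteq> 0 \<longrightarrow> x \<bullet> (A *v x) > 0)"

definition mat_sqrt :: "real^'n^'n \<Rightarrow> real^'n^'n" where
  "mat_sqrt A = (THE B. pos_def_mat B \<and> B ** B = A)"

definition muA :: "real^'n^'n \<Rightarrow> real^'n \<Rightarrow> real^'n \<Rightarrow> real^'n" where
  "muA A mu1 mu2 = mat_sqrt A *v (mu1 - mu2)"

definition SigmaA :: "real^'n^'n \<Rightarrow> real^'n^'n \<Rightarrow> real^'n^'n" where
  "SigmaA A S = mat_sqrt A ** S ** mat_sqrt A"

definition Delta :: "real^'n^'n \<Rightarrow> real^'n \<Rightarrow> real^'n \<Rightarrow> real" where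
  "Delta A mu1 mu2 = (norm (muA A mu1 mu2))\<^sup>2"

definition K2 :: "real^'n^'n \<Rightarrow> real^'n \<Rightarrow> real^'n \<Rightarrow> real^'n^'n \<Rightarrow> real^'n^'n \<Rightarrow> nat \<Rightarrow> nat \<Rightarrow> real" where
  "K2 A mu1 mu2 S1 S2 n1 n2 =
     4 * (muA A mu1 mu2 \<bullet> (SigmaA A S1 *v muA A mu1 mu2) / real n1
        + muA A mu1 mu2 \<bullet> (SigmaA A S2 *v muA A mu1 mu2) / real n2)"

end

theory Submission
  imports Defs
begin


lemma sym_inner:
  fixes M :: "real^'n^'n"
  assumes "transpose M = M"
  shows "(M *v x) \<bullet> y = x \<bullet> (M *v y)"
proof -
  have "x v* M = M *v x" using vector_transpose_matrix[of x M] assms by simp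
  thus ?thesis using dot_lmul_matrix[of x M y] by simp
qed

lemma sym_from_inner:
  fixes M :: "real^'n^'n"
  assumes "\<And>x y. (M *v x) \<bullet> y = x \<bullet> (M *v y)"
  shows "transpose M = M"
proof -
  have "transpose M *v x = M *v x" for x
  proof -
    have "(transpose M *v x) \<bullet> y = (M *v x) \<bullet> y" for y
      using dot_lmul_matrix[of x M y] assms[of x y] by simp
    hence "(transpose M *v x - M *v x) \<bullet> (transpose M *v x - M *v x) = 0"
      by (simp add: inner_diff_left)
    thus ?thesis by simp
  qed
  thus ?thesis by (simp add: matrix_eq)
qed

lemma eigvec:
  fixes M :: "real^'n^'n"
  assumes sym: "transpose M = M" and S: "subspace S" and ne: "x0 \<in> S" "x0 \<noteq> 0"
    and inv: "\<And>x. x \<in> S \<Longrightarrow> M *v x \<in> S"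
  shows "\<exists>v\<in>S. norm v = 1 \<and> M *v v = (v \<bullet> (M *v v)) *\<^sub>R v"
proof -
  define K where "K = S \<inter> sphere 0 1"
  have "compact K" unfolding K_def
    by (metis Int_commute S closed_subspace compact_Int_closed compact_sphere)
  have "x0 /\<^sub>R norm x0 \<in> K" using ne unfolding K_def
    by (simp add: S subspace_scale)
  hence "K \<noteq> {}" by auto
  have cK: "continuous_on K (\<lambda>x. x \<bullet> (M *v x))"
    by (intro continuous_intros)
  then obtain v where vK: "v \<in> K" and vmax: "\<And>x. x \<in> K \<Longrightarrow> x \<bullet> (M *v x) \<le> v \<bullet> (M *v v)"
    using continuous_attains_sup[OF \<open>compact K\<close> \<open>K \<noteq> {}\<close> cK] by blast
  define m where "m = v \<bullet> (M *v v)"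
  have vS: "v \<in> S" and nv: "norm v = 1" using vK by (auto simp: K_def)
  have vv: "v \<bullet> v = 1" using nv by (simp add: norm_eq_1)
  have c1: "x \<bullet> (M *v x) \<le> m * (x \<bullet> x)" if "x \<in> S" for x
  proof (cases "x = 0")
    case True thus ?thesis by simp
  next
    case False
    have "x /\<^sub>R norm x \<in> K" using that False unfolding K_def by (simp add: S subspace_scale)
    hence "(x /\<^sub>R norm x) \<bullet> (M *v (x /\<^sub>R norm x)) \<le> m" using vmax m_def by blast
    hence "(x \<bullet> (M *v x)) / (norm x)^2 \<le> m"
      by (simp add: matrix_vector_mult_scaleR power2_eq_square divide_inverse mult_ac)
    moreover have "(norm x)^2 > 0" using False by simp
    ultimately have "x \<bullet> (M *v x) \<le> m * (norm x)^2" by (simp add: divide_le_eq)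
    thus ?thesis by (simp add: power2_norm_eq_inner)
  qed
  have c2: "w \<bullet> (M *v v) = 0" if wS: "w \<in> S" and wv: "w \<bullet> v = 0" for w
  proof -
    define a where "a = w \<bullet> (M *v v)"
    define b where "b = w \<bullet> (M *v w) - m * (w \<bullet> w)"
    have key: "2 * t * a + t^2 * b \<le> 0" for t
    proof -
      have "v + t *\<^sub>R w \<in> S" using vS wS S by (simp add: subspace_add subspace_scale)
      from c1[OF this] have "(v + t *\<^sub>R w) \<bullet> (M *v (v + t *\<^sub>R w)) \<le> m * ((v + t *\<^sub>R w) \<bullet> (v + t *\<^sub>R w))" .
      moreover have "v \<bullet> (M *v w) = a" using sym_inner[OF sym, of v w] a_def by (simp add: inner_commute)
      ultimately show ?thesis using wv vv unfolding a_def b_def m_def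
        by (simp add: matrix_vector_right_distrib matrix_vector_mult_scaleR inner_add_left inner_add_right
            inner_commute power2_eq_square algebra_simps)
    qed
    define c where "c = \<bar>b\<bar> + 1"
    have cpos: "c > 0" unfolding c_def by simp
    have "2 * (a/c) * a + (a/c)^2 * b \<le> 0" using key .
    hence "(2 * (a/c) * a + (a/c)^2 * b) * c^2 \<le> 0" using cpos
      by (simp add: mult_nonpos_nonneg)
    moreover have "(2 * (a/c) * a + (a/c)^2 * b) * c^2 = a^2 * (2 * c + b)" using cpos
      by (simp add: field_simps power2_eq_square)
    ultimately have "a^2 * (2 * c + b) \<le> 0" by simp
    moreover have "2 * c + b > 0" unfolding c_def by (simp add: abs_if)
    ultimately have "a^2 \<le> 0" by (simp add: mult_le_0_iff)
    thus ?thesis unfolding a_def by simp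
  qed
  define u where "u = M *v v - m *\<^sub>R v"
  have uS: "u \<in> S" unfolding u_def using inv[OF vS] vS S by (simp add: subspace_diff subspace_scale)
  have uv: "u \<bullet> v = 0" unfolding u_def m_def using vv
    by (simp add: inner_diff_left inner_diff_right inner_commute)
  have "u \<bullet> u = u \<bullet> (M *v v) - m * (u \<bullet> v)" unfolding u_def by (simp add: inner_diff_right)
  also have "\<dots> = 0" using c2[OF uS uv] uv by simp
  finally have "u = 0" by simp
  thus ?thesis using vS nv unfolding u_def m_def by auto
qed



lemma spectral_sub:
  fixes M :: "real^'n^'n"
  assumes sym: "transpose M = M"
  shows "subspace S \<Longrightarrow> (\<forall>x\<in>S. M *v x \<in> S) \<Longrightarrow>
    \<exists>B. B \<subseteq> S \<and> pairwise orthogonal B \<and> (\<forall>v\<in>B. norm v = 1 \<and> M *v v = (v \<bullet> (M *v v)) *\<^sub>R v)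
      \<and> S \<subseteq> span B"
proof (induction "dim S" arbitrary: S rule: less_induct)
  case less
  show ?case
  proof (cases "S \<subseteq> {0}")
    case True thus ?thesis by (intro exI[of _ "{}"]) auto
  next
    case False
    then obtain x0 where "x0 \<in> S" "x0 \<noteq> 0" by auto
    from eigvec[OF sym less.prems(1) this] less.prems(2)
    obtain v where vS: "v \<in> S" and nv: "norm v = 1" and ev: "M *v v = (v \<bullet> (M *v v)) *\<^sub>R v"
      by blast
    have vv: "v \<bullet> v = 1" using nv by (simp add: norm_eq_1)
    define S' where "S' = S \<inter> {x. v \<bullet> x = 0}"
    have sub': "subspace S'" unfolding S'_def
      using less.prems(1) subspace_hyperplane[of v] by (simp add: subspace_inter)
    have inv': "\<forall>x\<in>S'. M *v x \<in> S'"
    proof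
      fix x assume x: "x \<in> S'"
      have "v \<bullet> (M *v x) = (M *v v) \<bullet> x" using sym_inner[OF sym, of v x] by simp
      also have "\<dots> = 0" using x ev unfolding S'_def by (metis (mono_tags, lifting) IntD2 inner_scaleR_left mem_Collect_eq mult_zero_right)
      finally show "M *v x \<in> S'" using x less.prems(2) unfolding S'_def by auto
    qed
    have "S' \<subset> S" using vS vv unfolding S'_def by (metis (mono_tags, lifting) IntE inf_le1 mem_Collect_eq psubsetI zero_neq_one)
    hence "span S' \<subset> span S" using sub' less.prems(1) by (simp add: span_eq_iff[THEN iffD2])
    hence "dim S' < dim S" by (rule dim_psubset)
    from less.hyps[OF this sub' inv'] obtain B' where
      B'S: "B' \<subseteq> S'" and po: "pairwise orthogonal B'"
      and pr: "\<forall>w\<in>B'. norm w = 1 \<and> M *v w = (w \<bullet> (M *v w)) *\<^sub>R w" and sp: "S' \<subseteq> span B'"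
      by blast
    show ?thesis
    proof (intro exI[of _ "insert v B'"] conjI)
      show "insert v B' \<subseteq> S" using B'S vS unfolding S'_def by auto
      have "orthogonal v w" if "w \<in> B'" for w using B'S that unfolding S'_def orthogonal_def by auto
      thus "pairwise orthogonal (insert v B')" using po
        by (simp add: pairwise_insert orthogonal_commute)
      show "\<forall>w\<in>insert v B'. norm w = 1 \<and> M *v w = (w \<bullet> (M *v w)) *\<^sub>R w" using pr nv ev by auto
      show "S \<subseteq> span (insert v B')"
      proof
        fix x assume x: "x \<in> S"
        have "x - (v \<bullet> x) *\<^sub>R v \<in> S'" unfolding S'_def using x vS less.prems(1) vv
          by (simp add: subspace_diff subspace_scale inner_diff_right)
        hence "x - (v \<bullet> x) *\<^sub>R v \<in> span (insert v B')" using sp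
          by (meson in_mono span_mono subset_insertI)
        moreover have "(v \<bullet> x) *\<^sub>R v \<in> span (insert v B')" by (simp add: span_base span_scale)
        ultimately have "(x - (v \<bullet> x) *\<^sub>R v) + (v \<bullet> x) *\<^sub>R v \<in> span (insert v B')"
          by (rule span_add)
        thus "x \<in> span (insert v B')" by simp
      qed
    qed
  qed
qed



lemma mv_sum:
  fixes M :: "real^'n^'n"
  shows "M *v sum f E = (\<Sum>w\<in>E. M *v f w)"
  using linear_sum[OF matrix_vector_mul_linear[of M]] by simp

lemma inner_sum_delta:
  fixes E :: "(real^'n) set"
  assumes fin: "finite E" and on: "\<forall>v\<in>E. \<forall>w\<in>E. v \<bullet> w = (if v = w then 1 else 0)" and v: "v \<in> E"
  shows "v \<bullet> (\<Sum>w\<in>E. c w *\<^sub>R w) = c v"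
proof -
  have "v \<bullet> (\<Sum>w\<in>E. c w *\<^sub>R w) = (\<Sum>w\<in>E. c w * (v \<bullet> w))" by (simp add: inner_sum_right)
  also have "\<dots> = (\<Sum>w\<in>E. if w = v then c w else 0)"
    by (rule sum.cong) (use on v in auto)
  also have "\<dots> = c v" using fin v by simp
  finally show ?thesis .
qed

lemma spectral:
  fixes M :: "real^'n^'n"
  assumes sym: "transpose M = M"
  shows "\<exists>E. finite E \<and> (\<forall>v\<in>E. \<forall>w\<in>E. v \<bullet> w = (if v = w then 1 else 0))
     \<and> (\<forall>v\<in>E. M *v v = (v \<bullet> (M *v v)) *\<^sub>R v) \<and> (\<forall>x. x = (\<Sum>w\<in>E. (w \<bullet> x) *\<^sub>R w))"
proof -
  obtain E where po: "pairwise orthogonal E" and pr: "\<forall>v\<in>E. norm v = 1 \<and> M *v v = (v \<bullet> (M *v v)) *\<^sub>R v"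
    and sp: "UNIV \<subseteq> span E"
    using spectral_sub[OF sym, of UNIV] by auto
  have fin: "finite E" using pairwise_orthogonal_imp_finite[OF po] .
  have on: "\<forall>v\<in>E. \<forall>w\<in>E. v \<bullet> w = (if v = w then 1 else 0)"
    using po pr by (auto simp: pairwise_def orthogonal_def norm_eq_1)
  have ex: "x = (\<Sum>w\<in>E. (w \<bullet> x) *\<^sub>R w)" for x
  proof -
    define y where "y = x - (\<Sum>w\<in>E. (w \<bullet> x) *\<^sub>R w)"
    have "orthogonal y v" if "v \<in> E" for v
      using inner_sum_delta[OF fin on that, of "\<lambda>w. w \<bullet> x"] that
      unfolding y_def orthogonal_def by (simp add: inner_diff_left inner_diff_right inner_commute)
    hence "orthogonal y y" using orthogonal_to_span[of y E y] sp by auto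
    hence "y = 0" by (simp add: orthogonal_def)
    thus ?thesis unfolding y_def by simp
  qed
  show ?thesis using fin on pr ex by blast
qed

lemma sqrt_exists:
  fixes A :: "real^'n^'n"
  assumes pd: "pos_def_mat A"
  shows "\<exists>B. pos_def_mat B \<and> B ** B = A"
proof -
  have sym: "transpose A = A" using pd by (simp add: pos_def_mat_def)
  obtain E where fin: "finite E" and on: "\<forall>v\<in>E. \<forall>w\<in>E. v \<bullet> w = (if v = w then 1 else 0)"
    and ev: "\<forall>v\<in>E. A *v v = (v \<bullet> (A *v v)) *\<^sub>R v" and ex: "\<And>x. x = (\<Sum>w\<in>E. (w \<bullet> x) *\<^sub>R w)"
    using spectral[OF sym] by blast
  define lam where "lam v = v \<bullet> (A *v v)" for v
  have lpos: "lam v > 0" if "v \<in> E" for v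
  proof -
    have "v \<noteq> 0" using on that by force
    thus ?thesis using pd unfolding lam_def pos_def_mat_def by blast
  qed
  define g where "g x = (\<Sum>w\<in>E. (sqrt (lam w) * (w \<bullet> x)) *\<^sub>R w)" for x
  have lin: "linear g"
    by (auto intro!: linearI simp: g_def inner_add_right distrib_left scaleR_add_left sum.distrib scaleR_sum_right mult_ac)
  define Bm where "Bm = matrix g"
  have Bg: "Bm *v x = g x" for x unfolding Bm_def using matrix_vector_mul(2)[OF lin] by metis
  have gin: "v \<bullet> g x = sqrt (lam v) * (v \<bullet> x)" if "v \<in> E" for v x
    unfolding g_def using inner_sum_delta[OF fin on that, of "\<lambda>w. sqrt (lam w) * (w \<bullet> x)"] .
  have symB: "(Bm *v x) \<bullet> y = x \<bullet> (Bm *v y)" for x y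
  proof -
    have "(Bm *v x) \<bullet> y = (\<Sum>w\<in>E. sqrt (lam w) * (w \<bullet> x) * (w \<bullet> y))"
      unfolding Bg g_def by (simp add: inner_sum_left)
    also have "\<dots> = x \<bullet> (Bm *v y)"
      unfolding Bg g_def by (simp add: inner_sum_right inner_commute mult_ac)
    finally show ?thesis .
  qed
  have tB: "transpose Bm = Bm" using sym_from_inner symB by blast
  have posB: "x \<bullet> (Bm *v x) > 0" if xne: "x \<noteq> 0" for x
  proof (rule ccontr)
    assume "\<not> ?thesis"
    hence le: "x \<bullet> (Bm *v x) \<le> 0" by simp
    have eqs: "x \<bullet> (Bm *v x) = (\<Sum>w\<in>E. sqrt (lam w) * (w \<bullet> x)^2)"
      unfolding Bg g_def by (simp add: inner_sum_right inner_commute power2_eq_square mult_ac)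
    have nn: "\<forall>w\<in>E. sqrt (lam w) * (w \<bullet> x)^2 \<ge> 0"
    proof
      fix w assume "w \<in> E"
      hence "sqrt (lam w) \<ge> 0" using lpos by (simp add: less_imp_le)
      thus "sqrt (lam w) * (w \<bullet> x)^2 \<ge> 0" by simp
    qed
    have "(\<Sum>w\<in>E. sqrt (lam w) * (w \<bullet> x)^2) \<ge> 0"
      by (rule sum_nonneg) (use nn in blast)
    hence "(\<Sum>w\<in>E. sqrt (lam w) * (w \<bullet> x)^2) = 0" using le eqs by linarith
    hence z: "\<forall>w\<in>E. sqrt (lam w) * (w \<bullet> x)^2 = 0"
      using sum_nonneg_eq_0_iff[OF fin, of "\<lambda>w. sqrt (lam w) * (w \<bullet> x)^2"] nn by simp
    have "\<forall>w\<in>E. w \<bullet> x = 0"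
    proof
      fix w assume w: "w \<in> E"
      have "sqrt (lam w) > 0" using lpos[OF w] by simp
      thus "w \<bullet> x = 0" using z w by force
    qed
    hence "(\<Sum>w\<in>E. (w \<bullet> x) *\<^sub>R w) = 0" by simp
    hence "x = 0" using ex[of x] by (rule_tac trans) 
    thus False using xne by simp
  qed
  have sq: "Bm ** Bm = A"
  proof -
    have "(Bm ** Bm) *v x = A *v x" for x
    proof -
      have "(Bm ** Bm) *v x = g (g x)" by (simp add: Bg matrix_vector_mul_assoc[symmetric])
      also have "\<dots> = (\<Sum>w\<in>E. (lam w * (w \<bullet> x)) *\<^sub>R w)"
        unfolding g_def[of "g x"] using lpos gin
        by (intro sum.cong) (auto simp: real_sqrt_mult_self less_imp_le mult.assoc[symmetric])
      also have "\<dots> = (\<Sum>w\<in>E. (w \<bullet> x) *\<^sub>R (A *v w))"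
      proof (rule sum.cong)
        fix w assume "w \<in> E"
        hence "A *v w = lam w *\<^sub>R w" using ev unfolding lam_def by blast
        thus "(lam w * (w \<bullet> x)) *\<^sub>R w = (w \<bullet> x) *\<^sub>R (A *v w)" by simp
      qed simp
      also have "\<dots> = A *v (\<Sum>w\<in>E. (w \<bullet> x) *\<^sub>R w)"
        by (simp add: mv_sum matrix_vector_mult_scaleR)
      also have "\<dots> = A *v x" by (simp only: ex[of x, symmetric])
      finally show ?thesis .
    qed
    thus ?thesis by (simp add: matrix_eq)
  qed
  show ?thesis using tB posB sq unfolding pos_def_mat_def by blast
qed

lemma sqrt_unique:
  fixes A B C :: "real^'n^'n"
  assumes "pos_def_mat B" "pos_def_mat C" "B ** B = A" "C ** C = A"
  shows "B = C"
proof -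
  have tB: "transpose B = B" and tC: "transpose C = C" using assms by (auto simp: pos_def_mat_def)
  define D where "D = B - C"
  have tD: "transpose D = D" unfolding D_def using tB tC
    by (simp add: transpose_def vec_eq_iff)
  have z: "B *v (D *v x) + D *v (C *v x) = 0" for x
  proof -
    have "B *v (D *v x) + D *v (C *v x) = B*v(B*v x) - B*v(C*v x) + (B*v(C*v x) - C*v(C*v x))"
      unfolding D_def by (simp add: matrix_vector_mult_diff_distrib matrix_vector_mult_diff_rdistrib)
    also have "\<dots> = (B ** B) *v x - (C ** C) *v x" by (simp add: matrix_vector_mul_assoc)
    finally show ?thesis using assms(3,4) by simp
  qed
  obtain E where fin: "finite E" and on: "\<forall>v\<in>E. \<forall>w\<in>E. v \<bullet> w = (if v = w then 1 else 0)"
    and ev: "\<forall>v\<in>E. D *v v = (v \<bullet> (D *v v)) *\<^sub>R v" and ex: "\<And>x. x = (\<Sum>w\<in>E. (w \<bullet> x) *\<^sub>R w)"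
    using spectral[OF tD] by blast
  have Dv: "D *v v = 0" if v: "v \<in> E" for v
  proof -
    define mu where "mu = v \<bullet> (D *v v)"
    have vne: "v \<noteq> 0" using on v by force
    have Dmu: "D *v v = mu *\<^sub>R v" using ev v unfolding mu_def by blast
    have "0 = v \<bullet> (B *v (D *v v) + D *v (C *v v))" using z by simp
    also have "\<dots> = v \<bullet> (B *v (D *v v)) + v \<bullet> (D *v (C *v v))"
      by (simp add: inner_add_right)
    also have "v \<bullet> (D *v (C *v v)) = (D *v v) \<bullet> (C *v v)" using sym_inner[OF tD] by simp
    also have "\<dots> = mu * (v \<bullet> (C *v v))" using Dmu by simp
    also have "v \<bullet> (B *v (D *v v)) = mu * (v \<bullet> (B *v v))" using Dmu
      by (simp add: matrix_vector_mult_scaleR)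
    finally have "mu * (v \<bullet> (B *v v) + v \<bullet> (C *v v)) = 0" by (simp add: algebra_simps)
    moreover have "v \<bullet> (B *v v) + v \<bullet> (C *v v) > 0" using assms(1,2) vne
      unfolding pos_def_mat_def by (simp add: add_pos_pos)
    ultimately have "mu = 0" by simp
    thus ?thesis using Dmu by simp
  qed
  have "D *v x = 0" for x
    apply (subst ex[of x]) using Dv by (simp add: mv_sum matrix_vector_mult_scaleR)
  hence "D = 0" by (simp add: matrix_eq)
  thus ?thesis unfolding D_def by simp
qed

lemma mat_sqrt_props:
  fixes A :: "real^'n^'n"
  assumes "pos_def_mat A"
  shows "pos_def_mat (mat_sqrt A)" "mat_sqrt A ** mat_sqrt A = A"
proof -
  obtain B0 where B0: "pos_def_mat B0 \<and> B0 ** B0 = A" using sqrt_exists[OF assms] by blast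
  have "\<exists>!B. pos_def_mat B \<and> B ** B = A"
  proof (rule ex1I[of _ B0])
    show "pos_def_mat B0 \<and> B0 ** B0 = A" by (rule B0)
    fix B assume "pos_def_mat B \<and> B ** B = A"
    thus "B = B0" using sqrt_unique[of B B0 A] B0 by blast
  qed
  hence "pos_def_mat (mat_sqrt A) \<and> mat_sqrt A ** mat_sqrt A = A"
    unfolding mat_sqrt_def by (rule theI')
  thus "pos_def_mat (mat_sqrt A)" "mat_sqrt A ** mat_sqrt A = A" by auto
qed



lemma smv: "(k *\<^sub>R (A::real^'n^'n)) *v v = k *\<^sub>R (A *v v)"
  by (simp add: scaleR_matrix_vector_assoc)

lemma Delta_K2_form:
  fixes A S1 S2 :: "real^'n^'n"
  assumes pd: "pos_def_mat A"
  shows "Delta A mu1 mu2 = (mu1 - mu2) \<bullet> (A *v (mu1 - mu2))"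
    and "K2 A mu1 mu2 S1 S2 n1 n2 = 4 * ((A *v (mu1 - mu2)) \<bullet>
          ((((1 / real n1) *\<^sub>R S1 + (1 / real n2) *\<^sub>R S2)) *v (A *v (mu1 - mu2))))"
proof -
  define B where "B = mat_sqrt A"
  define d where "d = mu1 - mu2"
  have tB: "transpose B = B" and BB: "B ** B = A"
    using mat_sqrt_props[OF pd] unfolding B_def pos_def_mat_def by auto
  have mu: "muA A mu1 mu2 = B *v d" unfolding muA_def B_def d_def ..
  have "Delta A mu1 mu2 = (B *v d) \<bullet> (B *v d)" unfolding Delta_def mu by (simp add: power2_norm_eq_inner)
  also have "\<dots> = d \<bullet> (B *v (B *v d))" by (rule sym_inner[OF tB])
  also have "\<dots> = d \<bullet> (A *v d)" by (simp add: matrix_vector_mul_assoc BB)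
  finally show "Delta A mu1 mu2 = (mu1 - mu2) \<bullet> (A *v (mu1 - mu2))" unfolding d_def .
  have t: "muA A mu1 mu2 \<bullet> (SigmaA A S *v muA A mu1 mu2) = (A *v d) \<bullet> (S *v (A *v d))" for S
  proof -
    have "muA A mu1 mu2 \<bullet> (SigmaA A S *v muA A mu1 mu2) = (B *v d) \<bullet> (B *v (S *v (B *v (B *v d))))"
      unfolding mu SigmaA_def B_def[symmetric] by (simp add: matrix_vector_mul_assoc matrix_mul_assoc)
    also have "\<dots> = (B *v (B *v d)) \<bullet> (S *v (B *v (B *v d)))" by (rule sym_inner[OF tB, symmetric])
    also have "\<dots> = (A *v d) \<bullet> (S *v (A *v d))" by (simp add: matrix_vector_mul_assoc BB)
    finally show ?thesis .
  qed
  show "K2 A mu1 mu2 S1 S2 n1 n2 = 4 * ((A *v (mu1 - mu2)) \<bullet>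
          ((((1 / real n1) *\<^sub>R S1 + (1 / real n2) *\<^sub>R S2)) *v (A *v (mu1 - mu2))))"
    unfolding K2_def t d_def[symmetric]
    by (simp add: matrix_vector_mult_add_rdistrib smv inner_add_right divide_inverse mult_ac)
qed

lemma quad_expand:
  fixes M :: "real^'n^'n"
  assumes "transpose M = M"
  shows "(z - t *\<^sub>R u) \<bullet> (M *v (z - t *\<^sub>R u)) = z \<bullet> (M *v z) - 2 * t * (z \<bullet> (M *v u)) + t^2 * (u \<bullet> (M *v u))"
proof -
  have "u \<bullet> (M *v z) = z \<bullet> (M *v u)" using sym_inner[OF assms, of z u] by (simp add: inner_commute)
  thus ?thesis
    by (simp add: matrix_vector_mult_diff_distrib matrix_vector_mult_scaleR inner_diff_left inner_diff_right
        power2_eq_square algebra_simps)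
qed

theorem propositionS1p1:
  fixes mu1 mu2 :: "real^'n" and S1 S2 A :: "real^'n^'n" and n1 n2 :: nat and c :: real
  assumes "pos_def_mat S1" and "pos_def_mat S2"
    and "n1 > 0" and "n2 > 0"
    and "mu1 \<noteq> mu2"
    and "c > 0"
    and "pos_def_mat A"
  shows "Delta A mu1 mu2 / sqrt (K2 A mu1 mu2 S1 S2 n1 n2)
    \<le> Delta (c *\<^sub>R matrix_inv ((1 / real n1) *\<^sub>R S1 + (1 / real n2) *\<^sub>R S2)) mu1 mu2
       / sqrt (K2 (c *\<^sub>R matrix_inv ((1 / real n1) *\<^sub>R S1 + (1 / real n2) *\<^sub>R S2)) mu1 mu2 S1 S2 n1 n2)"
proof -
  define M where "M = (1 / real n1) *\<^sub>R S1 + (1 / real n2) *\<^sub>R S2"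
  define Mi where "Mi = matrix_inv M"
  define d where "d = mu1 - mu2"
  have dne: "d \<noteq> 0" using assms(5) unfolding d_def by simp
  have Mx: "M *v x = (1 / real n1) *\<^sub>R (S1 *v x) + (1 / real n2) *\<^sub>R (S2 *v x)" for x
    unfolding M_def by (simp add: matrix_vector_mult_add_rdistrib smv)
  have symM: "(M *v x) \<bullet> y = x \<bullet> (M *v y)" for x y
    using sym_inner[of S1 x y] sym_inner[of S2 x y] assms(1,2) unfolding Mx pos_def_mat_def
    by (simp add: inner_add_left inner_add_right)
  have tM: "transpose M = M" by (rule sym_from_inner[OF symM])
  have posM: "x \<bullet> (M *v x) > 0" if "x \<noteq> 0" for x
  proof -
    have "x \<bullet> (S1 *v x) > 0" "x \<bullet> (S2 *v x) > 0" using assms(1,2) that unfolding pos_def_mat_def by auto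
    thus ?thesis unfolding Mx using assms(3,4) by (simp add: inner_add_right add_pos_pos)
  qed
  have "\<exists>B. B ** M = mat 1"
    unfolding matrix_left_invertible_ker
  proof (intro allI impI)
    fix x assume "M *v x = 0"
    hence "x \<bullet> (M *v x) = 0" by simp
    thus "x = 0" using posM by force
  qed
  hence "invertible M" by (simp add: invertible_left_inverse)
  hence "M ** Mi = mat 1 \<and> Mi ** M = mat 1"
    unfolding Mi_def matrix_inv_def invertible_def by (rule someI_ex)
  hence MMi: "M *v (Mi *v x) = x" and MiM: "Mi *v (M *v x) = x" for x
    by (simp_all add: matrix_vector_mul_assoc)
  have symMi: "(Mi *v x) \<bullet> y = x \<bullet> (Mi *v y)" for x y
  proof -
    have "(Mi *v x) \<bullet> y = (Mi *v x) \<bullet> (M *v (Mi *v y))" by (simp add: MMi)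
    also have "\<dots> = (M *v (Mi *v x)) \<bullet> (Mi *v y)" by (simp add: symM)
    finally show ?thesis by (simp add: MMi)
  qed
  have posMi: "x \<bullet> (Mi *v x) > 0" if "x \<noteq> 0" for x
  proof -
    have ne: "Mi *v x \<noteq> 0" using that MMi[of x] by auto
    have "x \<bullet> (Mi *v x) = (M *v (Mi *v x)) \<bullet> (Mi *v x)" by (simp add: MMi)
    also have "\<dots> = (Mi *v x) \<bullet> (M *v (Mi *v x))" by (simp add: inner_commute)
    finally show ?thesis using posM[OF ne] by simp
  qed
  define Ac where "Ac = c *\<^sub>R Mi"
  have pdAc: "pos_def_mat Ac" unfolding pos_def_mat_def
  proof
    show "transpose Ac = Ac" unfolding Ac_def
      by (rule sym_from_inner) (simp add: smv symMi)
    show "\<forall>x. x \<noteq> 0 \<longrightarrow> 0 < x \<bullet> (Ac *v x)" unfolding Ac_def using posMi assms(6) by (simp add: smv)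
  qed
  define q where "q = d \<bullet> (Mi *v d)"
  have qpos: "q > 0" unfolding q_def using posMi[OF dne] .
  have rhs: "Delta Ac mu1 mu2 / sqrt (K2 Ac mu1 mu2 S1 S2 n1 n2) = sqrt q / 2"
  proof -
    have "Delta Ac mu1 mu2 = d \<bullet> (Ac *v d)" using Delta_K2_form(1)[OF pdAc] d_def by simp
    also have "\<dots> = c * q" unfolding q_def Ac_def by (simp add: smv)
    finally have D: "Delta Ac mu1 mu2 = c * q" .
    have "K2 Ac mu1 mu2 S1 S2 n1 n2 = 4 * ((Ac *v d) \<bullet> (M *v (Ac *v d)))"
      unfolding Delta_K2_form(2)[OF pdAc] d_def M_def ..
    also have "\<dots> = 4 * (c^2 * q)" unfolding Ac_def q_def
      by (simp add: smv matrix_vector_mult_scaleR MMi power2_eq_square inner_commute)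
    finally have K: "K2 Ac mu1 mu2 S1 S2 n1 n2 = (2 * c)^2 * q" by (simp add: power2_eq_square)
    have "sqrt ((2 * c)^2 * q) = 2 * c * sqrt q" using assms(6) by (simp add: real_sqrt_mult)
    hence "Delta Ac mu1 mu2 / sqrt (K2 Ac mu1 mu2 S1 S2 n1 n2) = c * q / (2 * c * sqrt q)" by (simp add: D K)
    also have "\<dots> = sqrt q / 2" using assms(6) qpos
      by (simp add: field_simps)
    finally show ?thesis .
  qed
  define u where "u = A *v d"
  define a where "a = u \<bullet> (M *v u)"
  define z where "z = Mi *v d"
  define b where "b = z \<bullet> (M *v u)"
  have dub: "d \<bullet> u = b" unfolding b_def z_def
    using symM[of "Mi *v d" u] by (simp add: MMi)
  have bpos: "b > 0" using assms(7) dne unfolding pos_def_mat_def dub[symmetric] u_def by auto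
  have une: "u \<noteq> 0" using bpos dub by auto
  have apos: "a > 0" unfolding a_def using posM[OF une] .
  have zMz: "z \<bullet> (M *v z) = q" unfolding z_def q_def by (simp add: MMi inner_commute)
  have cs: "b^2 \<le> q * a"
  proof -
    have "0 \<le> (z - (b/a) *\<^sub>R u) \<bullet> (M *v (z - (b/a) *\<^sub>R u))"
    proof (cases "z - (b/a) *\<^sub>R u = 0")
      case True thus ?thesis by simp
    next
      case False thus ?thesis using posM[OF False] by simp
    qed
    also have "\<dots> = q - 2 * (b/a) * b + (b/a)^2 * a"
      unfolding quad_expand[OF tM] zMz b_def[symmetric] a_def[symmetric] ..
    also have "\<dots> = q - b^2 / a" using apos by (simp add: field_simps power2_eq_square)
    finally have "b^2 / a \<le> q" by simp
    thus ?thesis using apos by (simp add: divide_le_eq mult.commute)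
  qed
  have lhs: "Delta A mu1 mu2 / sqrt (K2 A mu1 mu2 S1 S2 n1 n2) = b / (2 * sqrt a)"
  proof -
    have "Delta A mu1 mu2 = b" unfolding Delta_K2_form(1)[OF assms(7)] d_def[symmetric] u_def[symmetric] dub ..
    moreover have "K2 A mu1 mu2 S1 S2 n1 n2 = 2^2 * a"
      unfolding Delta_K2_form(2)[OF assms(7)] d_def[symmetric] u_def[symmetric] M_def[symmetric] a_def by simp
    ultimately show ?thesis by (simp add: real_sqrt_mult)
  qed
  have "b \<le> sqrt q * sqrt a"
  proof -
    have "b \<le> sqrt (q * a)" using cs bpos by (simp add: real_le_rsqrt)
    thus ?thesis by (simp add: real_sqrt_mult)
  qed
  hence "b / (2 * sqrt a) \<le> sqrt q / 2" using apos by (simp add: field_simps)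
  hence L: "Delta A mu1 mu2 / sqrt (K2 A mu1 mu2 S1 S2 n1 n2) \<le> sqrt q / 2" using lhs by simp
  have R: "Delta (c *\<^sub>R matrix_inv ((1 / real n1) *\<^sub>R S1 + (1 / real n2) *\<^sub>R S2)) mu1 mu2
       / sqrt (K2 (c *\<^sub>R matrix_inv ((1 / real n1) *\<^sub>R S1 + (1 / real n2) *\<^sub>R S2)) mu1 mu2 S1 S2 n1 n2) = sqrt q / 2"
    using rhs unfolding Ac_def Mi_def M_def .
  show ?thesis using L R by linarith
qed


end
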